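(* Let $G$ be a finite group and let $\Omega$ be a connected component of $\mathcal{P}^*(G)$ which is a clique (its vertices are pairwise adjacent). Then there exist a prime $p\in\pi(G)$ and a cyclic $p$-subgroup $H$ of $G$ such that $\mathcal{P}^*(H)=\Omega$.
   Context: For a finite group $G$, the power graph $\mathcal{P}(G)$ is the simple undirected graph with vertex set $G$, two distinct vertices $x,y$ being adjacent iff $\langle x\rangle\subseteq\langle y\rangle$ or $\langle y\rangle\subseteq\langle x\rangle$. $\mathcal{P}^*(G)$ denotes the graph obtained from $\mathcal{P}(G)$ by deleting the vertex $1$ (for a subgroup $H$, $\mathcal{P}^*(H)$ is the corresponding graph on $H\setminus\{1\}$, a subgraph of $\mathcal{P}^*(G)$). $\pi(G)$ is the set of prime divisors of $|G|$. *)

theory Defs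
  imports "HOL-Algebra.Algebra"
begin

definition pg_adj :: "('a, 'b) monoid_scheme \<Rightarrow> 'a \<Rightarrow> 'a \<Rightarrow> bool" where
  "pg_adj G x y \<longleftrightarrow> x \<noteq> y \<and>
     (generate G {x} \<subseteq> generate G {y} \<or> generate G {y} \<subseteq> generate G {x})"

definition pstar_vertices :: "('a, 'b) monoid_scheme \<Rightarrow> 'a set" where
  "pstar_vertices G = carrier G - {\<one>\<^bsub>G\<^esub>}"

definition pstar_adj :: "('a, 'b) monoid_scheme \<Rightarrow> 'a \<Rightarrow> 'a \<Rightarrow> bool" where
  "pstar_adj G x y \<longleftrightarrow> x \<in> pstar_vertices G \<and> y \<in> pstar_vertices G \<and> pg_adj G x y"

definition pstar_component :: "('a, 'b) monoid_scheme \<Rightarrow> 'a set \<Rightarrow> bool" where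
  "pstar_component G \<Omega> \<longleftrightarrow>
     (\<exists>x \<in> pstar_vertices G. \<Omega> = {y \<in> pstar_vertices G. (pstar_adj G)\<^sup>*\<^sup>* x y})"

definition pstar_clique :: "('a, 'b) monoid_scheme \<Rightarrow> 'a set \<Rightarrow> bool" where
  "pstar_clique G \<Omega> \<longleftrightarrow> (\<forall>x \<in> \<Omega>. \<forall>y \<in> \<Omega>. x \<noteq> y \<longrightarrow> pstar_adj G x y)"

end

theory Submission
  imports Defs "HOL-Computational_Algebra.Primes"
begin

context group begin

lemma pow_ord_dvd:
  assumes "finite (carrier G)" "b \<in> carrier G" "a \<in> generate G {b}"
  shows "group.ord G a dvd group.ord G b"
proof -
  obtain k :: nat where k: "a = b [^] k"
    using assms generate_pow_on_finite_carrier by blast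
  have "ord (b [^] k) = (if k = 0 then 1 else ord b div gcd (ord b) k)"
    using ord_pow_gen[OF assms(2)] .
  moreover have "ord b div gcd (ord b) k dvd ord b"
  proof -
    have "ord b div gcd (ord b) k * gcd (ord b) k = ord b"
      by (rule dvd_div_mult_self) simp
    then show ?thesis by (metis dvd_triv_left)
  qed
  ultimately show ?thesis using k by simp
qed

lemma all_factors_power:
  fixes n p :: nat
  assumes "n > 0" "Factorial_Ring.prime p" "\<And>q. Factorial_Ring.prime q \<Longrightarrow> q dvd n \<Longrightarrow> q = p"
  shows "\<exists>k. n = p ^ k"
proof -
  have "prime_factors n \<subseteq> {p}"
    using assms by (auto simp: prime_factors_dvd)
  then have "prime_factors n = {} \<or> prime_factors n = {p}" by blast
  then show ?thesis
  proof
    assume "prime_factors n = {}"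
    then have "n = 1" using prime_factorization_nat[OF assms(1)] by simp
    then show ?thesis by (intro exI[of _ 0]) simp
  next
    assume "prime_factors n = {p}"
    then have "n = p ^ multiplicity p n" using prime_factorization_nat[OF assms(1)] by simp
    then show ?thesis by blast
  qed
qed

lemma main_aux:
  assumes "finite (carrier G)"
    and "pstar_component G \<Omega>" and "pstar_clique G \<Omega>"
  shows "\<exists>(p::nat) H. Factorial_Ring.prime p \<and> p dvd order G \<and> subgroup H G
           \<and> (\<exists>g \<in> H. H = generate G {g}) \<and> (\<exists>k::nat. card H = p ^ k)
           \<and> H - {\<one>\<^bsub>G\<^esub>} = \<Omega>
           \<and> (\<forall>x \<in> H - {\<one>\<^bsub>G\<^esub>}. \<forall>y \<in> H - {\<one>\<^bsub>G\<^esub>}.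
                 pg_adj (G\<lparr>carrier := H\<rparr>) x y \<longleftrightarrow> pstar_adj G x y)"
proof -
  note fin = assms(1)
  obtain x0 where x0: "x0 \<in> pstar_vertices G"
    and Om: "\<Omega> = {y \<in> pstar_vertices G. (pstar_adj G)\<^sup>*\<^sup>* x0 y}"
    using assms(2) unfolding pstar_component_def by blast
  have x0O: "x0 \<in> \<Omega>" using x0 Om by auto
  have OV: "\<Omega> \<subseteq> pstar_vertices G" using Om by auto
  have V: "pstar_vertices G = carrier G - {\<one>}" by (simp add: pstar_vertices_def)
  have closed: "z \<in> \<Omega>" if "y \<in> \<Omega>" "pstar_adj G y z" for y z
  proof -
    have "z \<in> pstar_vertices G" using that(2) by (simp add: pstar_adj_def)
    moreover have "(pstar_adj G)\<^sup>*\<^sup>* x0 z" using that Om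
      by (auto intro: rtranclp.rtrancl_into_rtrancl)
    ultimately show ?thesis using Om by auto
  qed
  have finO: "finite \<Omega>"
  proof -
    have "finite (pstar_vertices G)" using fin V by simp
    then show ?thesis using OV finite_subset by blast
  qed
  define f where "f y = card (generate G {y})" for y
  have "Max (f ` \<Omega>) \<in> f ` \<Omega>" using finO x0O by (intro Max_in) auto
  then obtain g where gO: "g \<in> \<Omega>" and gM: "f g = Max (f ` \<Omega>)" by auto
  have gmax: "\<forall>y\<in>\<Omega>. f y \<le> f g" unfolding gM using finO by (auto intro: Max_ge)
  have gc: "g \<in> carrier G" "g \<noteq> \<one>" using gO OV V by auto
  define H where "H = generate G {g}"
  have subH: "subgroup H G" unfolding H_def using gc by (simp add: generate_is_subgroup)
  have finH: "finite H" using subH fin by (meson finite_subset subgroup.subset)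
  have gen_fin: "finite (generate G {y})" if "y \<in> carrier G" for y
  proof -
    have "{y} \<subseteq> carrier G" using that by simp
    then have "generate G {y} \<subseteq> carrier G" by (rule generate_incl)
    then show ?thesis using fin finite_subset by blast
  qed
  have incl: "generate G {y} \<subseteq> H" if "y \<in> \<Omega>" for y
  proof (cases "y = g")
    case True then show ?thesis by (simp add: H_def)
  next
    case False
    then have "pstar_adj G y g" using assms(3) that gO unfolding pstar_clique_def by blast
    then have "generate G {y} \<subseteq> H \<or> H \<subseteq> generate G {y}"
      unfolding pstar_adj_def pg_adj_def H_def by blast
    moreover have "y \<in> carrier G" using that OV V by auto
    moreover have "f y \<le> f g" using gmax that by auto
    ultimately show ?thesis unfolding f_def H_def
      using gen_fin[of y] card_seteq[of "generate G {y}" H] H_def by blast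
  qed
  have HO: "H - {\<one>} = \<Omega>"
  proof
    show "\<Omega> \<subseteq> H - {\<one>}"
    proof
      fix y assume y: "y \<in> \<Omega>"
      then have "y \<in> carrier G" "y \<noteq> \<one>" using OV V by auto
      then have "y \<in> generate G {y}" by (simp add: generate.incl)
      then show "y \<in> H - {\<one>}" using incl y \<open>y \<noteq> \<one>\<close> by auto
    qed
  next
    show "H - {\<one>} \<subseteq> \<Omega>"
    proof
      fix y assume y: "y \<in> H - {\<one>}"
      then have yc: "y \<in> carrier G" using subH subgroup.subset by blast
      show "y \<in> \<Omega>"
      proof (cases "y = g")
        case True then show ?thesis using gO by simp
      next
        case False
        have "generate G {y} \<subseteq> H" unfolding H_def
          using y subH H_def by (simp add: generate_subgroup_incl)
        then have "pstar_adj G g y" unfolding pstar_adj_def pg_adj_def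
          using False y yc gc V H_def by auto
        then show ?thesis using closed gO by blast
      qed
    qed
  qed
  have ordH: "card H = ord g" unfolding H_def using generate_pow_card[OF gc(1)] by simp
  have oneH: "\<one> \<in> H" using subH subgroup.one_closed by blast
  have pos: "ord g > 0" using ordH finH oneH card_gt_0_iff by fastforce
  have elem: "\<exists>a \<in> \<Omega>. ord a = q" if q: "Factorial_Ring.prime q" "q dvd card H" for q
  proof -
    obtain m where m: "ord g = q * m" using q(2) ordH by (auto elim: dvdE)
    have q0: "q > 0" "q \<noteq> 1" using q(1) prime_gt_0_nat by auto
    have m0: "m \<noteq> 0" using m pos by auto
    have md: "ord g div q = m" using m q0 by simp
    define a where "a = g [^] m"
    have "m dvd ord g" using m by simp
    then have "ord a = ord g div m" unfolding a_def using ord_pow gc m0 by blast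
    also have "\<dots> = q" using m m0 by simp
    finally have oa: "ord a = q" .
    have ac: "a \<in> carrier G" unfolding a_def using gc by simp
    have "a \<noteq> \<one>" using oa q0 ord_eq_1[OF ac] by auto
    moreover have "a \<in> H" unfolding H_def a_def using gc fin generate_pow_on_finite_carrier by blast
    ultimately show ?thesis using oa HO by blast
  qed
  have cardH: "card H > 1"
  proof -
    have "{\<one>, g} \<subseteq> H" using subH gO HO subgroup.one_closed by blast
    then have "card {\<one>, g} \<le> card H" using finH card_mono by blast
    then show ?thesis using gc by auto
  qed
  obtain p where p: "Factorial_Ring.prime p" "p dvd card H"
    using prime_factor_nat[of "card H"] cardH by auto
  have uniq: "q = p" if q: "Factorial_Ring.prime q" "q dvd card H" for q
  proof (rule ccontr)
    assume ne: "q \<noteq> p"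
    obtain a where a: "a \<in> \<Omega>" "ord a = p" using elem p by blast
    obtain b where b: "b \<in> \<Omega>" "ord b = q" using elem q by blast
    have ab: "a \<noteq> b" using a b ne by auto
    have ac: "a \<in> carrier G" and bc: "b \<in> carrier G" using a b OV V by auto
    have "pstar_adj G a b" using assms(3) a b ab unfolding pstar_clique_def by blast
    then have "generate G {a} \<subseteq> generate G {b} \<or> generate G {b} \<subseteq> generate G {a}"
      unfolding pstar_adj_def pg_adj_def by blast
    then have "ord a dvd ord b \<or> ord b dvd ord a"
      using pow_ord_dvd[OF fin] ac bc generate.incl[of a "{a}" G] generate.incl[of b "{b}" G]
      by blast
    then show False using primes_dvd_imp_eq[OF p(1) q(1)] primes_dvd_imp_eq[OF q(1) p(1)] a b ne by auto
  qed
  have "\<exists>k. card H = p ^ k"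
  proof (rule all_factors_power)
    show "card H > 0" using cardH by simp
    show "Factorial_Ring.prime p" using p(1) .
    show "q = p" if "Factorial_Ring.prime q" "q dvd card H" for q using uniq that .
  qed
  then obtain k where k: "card H = p ^ k" by blast
  have "card H dvd order G" using ord_dvd_group_order[OF gc(1)] ordH by simp
  then have pdvd: "p dvd order G" using p dvd_trans by blast
  have last: "pg_adj (G\<lparr>carrier := H\<rparr>) x y \<longleftrightarrow> pstar_adj G x y"
    if "x \<in> H - {\<one>}" "y \<in> H - {\<one>}" for x y
  proof -
    have "generate (G\<lparr>carrier := H\<rparr>) {x} = generate G {x}"
      using that subH generate_consistent by auto
    moreover have "generate (G\<lparr>carrier := H\<rparr>) {y} = generate G {y}"
      using that subH generate_consistent by auto
    moreover have "x \<in> pstar_vertices G" "y \<in> pstar_vertices G" using that HO OV by auto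
    ultimately show ?thesis unfolding pg_adj_def pstar_adj_def by auto
  qed
  show ?thesis
    apply (rule exI[of _ p], rule exI[of _ H])
    using p pdvd subH gO HO k last H_def by blast
qed

end

theorem lemma3p3:
  fixes G :: "('a, 'b) monoid_scheme" and \<Omega> :: "'a set"
  assumes "group G" and "finite (carrier G)"
    and "pstar_component G \<Omega>" and "pstar_clique G \<Omega>"
  shows "\<exists>(p::nat) H. Factorial_Ring.prime p \<and> p dvd order G \<and> subgroup H G
           \<and> (\<exists>g \<in> H. H = generate G {g}) \<and> (\<exists>k::nat. card H = p ^ k)
           \<and> H - {\<one>\<^bsub>G\<^esub>} = \<Omega>
           \<and> (\<forall>x \<in> H - {\<one>\<^bsub>G\<^esub>}. \<forall>y \<in> H - {\<one>\<^bsub>G\<^esub>}.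
                 pg_adj (G\<lparr>carrier := H\<rparr>) x y \<longleftrightarrow> pstar_adj G x y)"
  using group.main_aux assms by blast

end
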